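(* If \(D\) is a dagger algebra, then so is \(D'\), the algebra \(D\) equipped with the compactoid bornology.
   Context: Let \(V\) be a complete discrete valuation ring with uniformiser \(\pi\). A bornology on a set is a collection of subsets (called bounded) containing all finite subsets and closed under finite unions and under taking subsets. A bornological \(V\)-module is a \(V\)-module with a bornology such that every bounded subset is contained in a bounded \(V\)-submodule; it is complete if every bounded subset is contained in a bounded \(\pi\)-adically complete \(V\)-submodule, and torsionfree if it is torsionfree as a \(V\)-module and \(\pi^{-1}S=\{x:\pi x\in S\}\) is bounded for every bounded \(S\). A bornological \(V\)-algebra is a \(V\)-algebra with such a bornology for which multiplication is bounded; it is semidagger if for every bounded \(S\), the \(V\)-submodule \(\sum_{i\ge 0}\pi^iS^{i+1}\) is bounded. A dagger algebra is a complete, torsionfree, semidagger bornological \(V\)-algebra. A subset \(S\subseteq D\) is compactoid if there is a bounded \(V\)-submodule \(T\subseteq D\) with \(S\subseteq T\) such that for every \(n\in\mathbb N\) there is a finite set \(F_n\subseteq T\) with \(S\subseteq VF_n+\pi^nT\). *)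

theory Defs
  imports Main "HOL.Modules"
begin

text \<open>Complete discrete valuation ring V (an integral domain) with uniformiser pi:
  pi is a nonzero non-unit, every nonzero element is a unit times a power of pi,
  and V is pi-adically complete (it is automatically pi-adically separated).\<close>
definition complete_dvr :: "'v::idom \<Rightarrow> bool" where
  "complete_dvr pi \<longleftrightarrow> pi \<noteq> 0 \<and> \<not> pi dvd 1 \<and>
     (\<forall>x. x \<noteq> 0 \<longrightarrow> (\<exists>u n. u dvd 1 \<and> x = u * pi ^ n)) \<and>
     (\<forall>x :: nat \<Rightarrow> 'v. (\<forall>n. pi ^ n dvd (x (Suc n) - x n)) \<longrightarrow>
        (\<exists>y. \<forall>n. pi ^ n dvd (y - x n)))"

definition pmul :: "('v::comm_ring_1 \<Rightarrow> 'd \<Rightarrow> 'd) \<Rightarrow> 'v \<Rightarrow> nat \<Rightarrow> 'd set \<Rightarrow> 'd set" where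
  "pmul smul pi n T = (\<lambda>t. smul (pi ^ n) t) ` T"

definition bornology :: "'d set set \<Rightarrow> bool" where
  "bornology B \<longleftrightarrow> (\<forall>F. finite F \<longrightarrow> F \<in> B) \<and> (\<forall>S\<in>B. \<forall>T\<in>B. S \<union> T \<in> B) \<and>
     (\<forall>S\<in>B. \<forall>T. T \<subseteq> S \<longrightarrow> T \<in> B)"

definition padic_complete :: "('v::comm_ring_1 \<Rightarrow> 'd::ab_group_add \<Rightarrow> 'd) \<Rightarrow> 'v \<Rightarrow> 'd set \<Rightarrow> bool" where
  "padic_complete smul pi T \<longleftrightarrow> (\<Inter>n. pmul smul pi n T) \<subseteq> {0} \<and>
     (\<forall>x :: nat \<Rightarrow> 'd. (\<forall>n. x n \<in> T) \<and> (\<forall>n. x (Suc n) - x n \<in> pmul smul pi n T) \<longrightarrow>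
        (\<exists>y\<in>T. \<forall>n. y - x n \<in> pmul smul pi n T))"

definition born_module :: "('v::comm_ring_1 \<Rightarrow> 'd::ab_group_add \<Rightarrow> 'd) \<Rightarrow> 'd set set \<Rightarrow> bool" where
  "born_module smul B \<longleftrightarrow> module smul \<and> bornology B \<and>
     (\<forall>S\<in>B. \<exists>T\<in>B. S \<subseteq> T \<and> module.subspace smul T)"

definition born_complete :: "('v::comm_ring_1 \<Rightarrow> 'd::ab_group_add \<Rightarrow> 'd) \<Rightarrow> 'v \<Rightarrow> 'd set set \<Rightarrow> bool" where
  "born_complete smul pi B \<longleftrightarrow>
     (\<forall>S\<in>B. \<exists>T\<in>B. S \<subseteq> T \<and> module.subspace smul T \<and> padic_complete smul pi T)"

definition born_torsionfree :: "('v::comm_ring_1 \<Rightarrow> 'd::ab_group_add \<Rightarrow> 'd) \<Rightarrow> 'v \<Rightarrow> 'd set set \<Rightarrow> bool" where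
  "born_torsionfree smul pi B \<longleftrightarrow> (\<forall>a x. a \<noteq> 0 \<longrightarrow> smul a x = 0 \<longrightarrow> x = 0) \<and>
     (\<forall>S\<in>B. {x. smul pi x \<in> S} \<in> B)"

definition born_algebra :: "('v::comm_ring_1 \<Rightarrow> 'd::ring \<Rightarrow> 'd) \<Rightarrow> 'd set set \<Rightarrow> bool" where
  "born_algebra smul B \<longleftrightarrow> born_module smul B \<and>
     (\<forall>a x y. smul a (x * y) = smul a x * y \<and> smul a (x * y) = x * smul a y) \<and>
     (\<forall>S\<in>B. \<forall>T\<in>B. {s * t | s t. s \<in> S \<and> t \<in> T} \<in> B)"

fun setpow :: "'d::ring set \<Rightarrow> nat \<Rightarrow> 'd set" where
  "setpow S 0 = {}"
| "setpow S (Suc 0) = S"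
| "setpow S (Suc (Suc n)) = {x * y | x y. x \<in> setpow S (Suc n) \<and> y \<in> S}"

definition semidagger :: "('v::comm_ring_1 \<Rightarrow> 'd::ring \<Rightarrow> 'd) \<Rightarrow> 'v \<Rightarrow> 'd set set \<Rightarrow> bool" where
  "semidagger smul pi B \<longleftrightarrow>
     (\<forall>S\<in>B. module.span smul (\<Union>i. pmul smul pi i (setpow S (Suc i))) \<in> B)"

definition dagger_algebra :: "('v::comm_ring_1 \<Rightarrow> 'd::ring \<Rightarrow> 'd) \<Rightarrow> 'v \<Rightarrow> 'd set set \<Rightarrow> bool" where
  "dagger_algebra smul pi B \<longleftrightarrow> born_algebra smul B \<and> born_complete smul pi B \<and>
     born_torsionfree smul pi B \<and> semidagger smul pi B"

definition compactoid :: "('v::comm_ring_1 \<Rightarrow> 'd::ab_group_add \<Rightarrow> 'd) \<Rightarrow> 'v \<Rightarrow> 'd set set \<Rightarrow> 'd set \<Rightarrow> bool" where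
  "compactoid smul pi B S \<longleftrightarrow> (\<exists>T\<in>B. module.subspace smul T \<and> S \<subseteq> T \<and>
     (\<forall>n::nat. \<exists>F. finite F \<and> F \<subseteq> T \<and>
        S \<subseteq> {f + t | f t. f \<in> module.span smul F \<and> t \<in> pmul smul pi n T}))"

definition compactoid_bornology :: "('v::comm_ring_1 \<Rightarrow> 'd::ab_group_add \<Rightarrow> 'd) \<Rightarrow> 'v \<Rightarrow> 'd set set \<Rightarrow> 'd set set" where
  "compactoid_bornology smul pi B = {S. compactoid smul pi B S}"

end

theory Submission
  imports Defs
begin

definition msum :: "'b::ab_group_add set \<Rightarrow> 'b set \<Rightarrow> 'b set" where
  "msum A C = {a + c | a c. a \<in> A \<and> c \<in> C}"

definition smulset :: "'b::ring set \<Rightarrow> 'b set \<Rightarrow> 'b set" where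
  "smulset X Y = {x * y | x y. x \<in> X \<and> y \<in> Y}"

lemma msum_mono: "A \<subseteq> A' \<Longrightarrow> C \<subseteq> C' \<Longrightarrow> msum A C \<subseteq> msum A' C'"
  unfolding msum_def by blast

lemma smulset_mono: "A \<subseteq> A' \<Longrightarrow> C \<subseteq> C' \<Longrightarrow> smulset A C \<subseteq> smulset A' C'"
  unfolding smulset_def by blast

lemma setpow_SS: "setpow S (Suc (Suc n)) = smulset (setpow S (Suc n)) S"
  by (simp add: smulset_def)

declare setpow.simps(3)[simp del]

lemma setpow_mono: "A \<subseteq> A' \<Longrightarrow> setpow A n \<subseteq> setpow A' n"
proof (induction n)
  case 0 then show ?case by simp
next
  case (Suc n) then show ?case
    by (cases n) (auto simp: setpow_SS dest: smulset_mono[THEN subsetD, rotated])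
qed

lemma finite_smulset: "finite A \<Longrightarrow> finite C \<Longrightarrow> finite (smulset A C)"
proof -
  assume "finite A" "finite C"
  have "smulset A C = (\<lambda>(x,y). x * y) ` (A \<times> C)" unfolding smulset_def by auto
  then show ?thesis using \<open>finite A\<close> \<open>finite C\<close> by simp
qed

lemma finite_setpow: "finite A \<Longrightarrow> finite (setpow A n)"
proof (induction n)
  case 0 then show ?case by simp
next
  case (Suc n) then show ?case
    by (cases n) (auto simp: setpow_SS intro!: finite_smulset)
qed

lemma setpow_half: "setpow T (Suc k) \<subseteq> setpow (T \<union> smulset T T) (Suc (k div 2))"
proof (induction k rule: less_induct)
  case (less k)
  show ?case
  proof (cases k)
    case 0 then show ?thesis by simp
  next
    case (Suc k1)
    show ?thesis
    proof (cases k1)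
      case 0 then show ?thesis using Suc by (simp add: setpow_SS)
    next
      case (Suc k2)
      have kk: "k = Suc (Suc k2)" using Suc \<open>k = Suc k1\<close> by simp
      have IH: "setpow T (Suc k2) \<subseteq> setpow (T \<union> smulset T T) (Suc (k2 div 2))"
        using less kk by simp
      have "setpow T (Suc k) = smulset (smulset (setpow T (Suc k2)) T) T"
        using kk by (simp add: setpow_SS)
      also have "\<dots> \<subseteq> smulset (setpow T (Suc k2)) (smulset T T)"
        unfolding smulset_def by (force simp: mult.assoc)
      also have "\<dots> \<subseteq> smulset (setpow (T \<union> smulset T T) (Suc (k2 div 2))) (T \<union> smulset T T)"
        using IH by (intro smulset_mono) auto
      also have "\<dots> = setpow (T \<union> smulset T T) (Suc (k div 2))"
        using kk by (simp add: setpow_SS)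
      finally show ?thesis .
    qed
  qed
qed


locale dag = module smul for smul :: "'a::idom \<Rightarrow> 'b::ring \<Rightarrow> 'b" +
  fixes pi :: 'a
  assumes tf: "\<And>a x. a \<noteq> 0 \<Longrightarrow> smul a x = 0 \<Longrightarrow> x = 0"
    and pi_nz: "pi \<noteq> 0"
    and mc1: "\<And>a x y. smul a (x * y) = smul a x * y"
    and mc2: "\<And>a x y. smul a (x * y) = x * smul a y"
begin

lemma pmul_iff: "x \<in> pmul smul pi n T \<longleftrightarrow> (\<exists>t\<in>T. x = smul (pi ^ n) t)"
  by (auto simp: pmul_def)

lemma pmulI: "t \<in> T \<Longrightarrow> smul (pi ^ n) t \<in> pmul smul pi n T"
  by (auto simp: pmul_def)

lemma pmul_mono: "A \<subseteq> C \<Longrightarrow> pmul smul pi n A \<subseteq> pmul smul pi n C"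
  by (auto simp: pmul_def)

lemma pmul_0: "pmul smul pi 0 T = T"
  by (auto simp: pmul_def)

lemma subspace_pmul: "subspace T \<Longrightarrow> subspace (pmul smul pi n T)"
proof -
  assume T: "subspace T"
  show ?thesis unfolding subspace_def
  proof (intro conjI ballI allI)
    show "0 \<in> pmul smul pi n T" using T subspace_0 pmulI[of 0 T n] by simp
  next
    fix x y assume "x \<in> pmul smul pi n T" "y \<in> pmul smul pi n T"
    then obtain a b where "a \<in> T" "b \<in> T" "x = smul (pi ^ n) a" "y = smul (pi ^ n) b"
      by (auto simp: pmul_def)
    then show "x + y \<in> pmul smul pi n T"
      using T subspace_add pmulI[of "a + b" T n] by (simp add: scale_right_distrib)
  next
    fix c x assume "x \<in> pmul smul pi n T"
    then obtain a where "a \<in> T" "x = smul (pi ^ n) a"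
      by (auto simp: pmul_def)
    then show "smul c x \<in> pmul smul pi n T"
      using T subspace_scale pmulI[of "smul c a" T n] by (simp add: mult.commute)
  qed
qed

lemma pmul_le: assumes "subspace T" "n \<le> m" shows "pmul smul pi m T \<subseteq> pmul smul pi n T"
proof
  fix x assume "x \<in> pmul smul pi m T"
  then obtain t where t: "t \<in> T" "x = smul (pi ^ m) t" by (auto simp: pmul_def)
  have "pi ^ m = pi ^ n * pi ^ (m - n)" using assms(2) by (simp add: power_add[symmetric])
  then have "x = smul (pi ^ n) (smul (pi ^ (m - n)) t)" using t by simp
  moreover have "smul (pi ^ (m - n)) t \<in> T" using t assms(1) subspace_scale by blast
  ultimately show "x \<in> pmul smul pi n T" by (metis pmulI)
qed

lemma subspace_msum: "subspace A \<Longrightarrow> subspace C \<Longrightarrow> subspace (msum A C)"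
  unfolding subspace_def msum_def
  apply (auto simp: scale_right_distrib)
    apply (metis add.right_neutral)
   apply (metis add.assoc add.left_commute)
  by blast

lemma scale_inj: assumes "smul (pi ^ n) x = smul (pi ^ n) y" shows "x = y"
proof -
  have "smul (pi ^ n) (x - y) = 0" using assms by (simp add: scale_right_diff_distrib)
  then show ?thesis using tf[of "pi ^ n" "x - y"] pi_nz by simp
qed

lemma span_mul: assumes "x \<in> span X" "y \<in> span Y" shows "x * y \<in> span (smulset X Y)"
proof -
  have A: "x * y \<in> span (smulset X Y)" if "x \<in> X" "y \<in> span Y" for x y
    using that(2)
  proof (induction rule: span_induct)
    case base
    show ?case unfolding subspace_def
      by (auto simp: distrib_left span_zero span_add mc2[symmetric] span_scale)
  next
    case (step y) then show ?case using that(1) by (auto intro!: span_base simp: smulset_def)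
  qed
  show ?thesis using assms(1)
  proof (induction rule: span_induct)
    case base
    show ?case unfolding subspace_def
      by (auto simp: distrib_right span_zero span_add mc1[symmetric] span_scale)
  next
    case (step x) then show ?case using A assms(2) by blast
  qed
qed


lemma noeth:
  assumes dvr: "\<And>x. x \<noteq> 0 \<Longrightarrow> \<exists>u n. u dvd 1 \<and> x = u * pi ^ n"
    and fin: "finite F"
  shows "subspace N \<Longrightarrow> N \<subseteq> span F \<Longrightarrow> \<exists>G. finite G \<and> G \<subseteq> N \<and> N \<subseteq> span G"
  using fin
proof (induction F arbitrary: N rule: finite_induct)
  case empty
  then have "N \<subseteq> {0}" by simp
  then show ?case by (intro exI[of _ "{}"]) auto
next
  case (insert f F)
  define N' where "N' = N \<inter> span F"
  have "subspace N'" unfolding N'_def using insert.prems subspace_inter by blast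
  then obtain G' where G': "finite G'" "G' \<subseteq> N'" "N' \<subseteq> span G'"
    using insert.IH[of N'] unfolding N'_def by blast
  define I where "I = {a. \<exists>y\<in>span F. smul a f + y \<in> N}"
  have dec: "\<exists>k. z - smul k f \<in> span F \<and> k \<in> I" if "z \<in> N" for z
  proof -
    have "z \<in> span (insert f F)" using that insert.prems by blast
    then obtain k where "z - smul k f \<in> span F" using span_breakdown_eq by blast
    moreover then have "k \<in> I" unfolding I_def using that by (intro CollectI bexI[of _ "z - smul k f"]) auto
    ultimately show ?thesis by blast
  qed
  show ?case
  proof (cases "I \<subseteq> {0}")
    case True
    have "N \<subseteq> span G'"
    proof
      fix z assume z: "z \<in> N"
      then obtain k where k: "z - smul k f \<in> span F" "k \<in> I" using dec by blast
      then have "k = 0" using True by blast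
      then have "z \<in> N'" using k z unfolding N'_def by simp
      then show "z \<in> span G'" using G' by blast
    qed
    then show ?thesis using G' unfolding N'_def by blast
  next
    case False
    define P where "P k \<longleftrightarrow> (\<exists>a\<in>I. \<exists>u. u dvd 1 \<and> a = u * pi ^ k)" for k
    obtain a1 where a1: "a1 \<in> I" "a1 \<noteq> 0" using False by blast
    then obtain u1 k1 where "u1 dvd 1" "a1 = u1 * pi ^ k1" using dvr by blast
    then have "P k1" unfolding P_def using a1 by blast
    define k0 where "k0 = (LEAST k. P k)"
    have "P k0" unfolding k0_def using \<open>P k1\<close> by (rule LeastI)
    then obtain a0 u0 where a0: "a0 \<in> I" "u0 dvd 1" "a0 = u0 * pi ^ k0" unfolding P_def by blast
    then obtain y0 where y0: "y0 \<in> span F" "smul a0 f + y0 \<in> N" unfolding I_def by blast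
    obtain v where v: "1 = u0 * v" using a0(2) by (auto elim: dvdE)
    define z0 where "z0 = smul v (smul a0 f + y0)"
    have z0N: "z0 \<in> N" unfolding z0_def using y0 insert.prems(1) subspace_scale by blast
    have z0eq: "z0 = smul (pi ^ k0) f + smul v y0"
    proof -
      have "v * a0 = pi ^ k0" using a0(3) v by (metis mult.assoc mult.commute mult_1)
      then show ?thesis unfolding z0_def by (simp add: scale_right_distrib)
    qed
    define G where "G = insert z0 G'"
    have "N \<subseteq> span G"
    proof
      fix z assume z: "z \<in> N"
      then obtain k where k: "z - smul k f \<in> span F" "k \<in> I" using dec by blast
      show "z \<in> span G"
      proof (cases "k = 0")
        case True
        then have "z \<in> N'" using k z unfolding N'_def by simp
        then show ?thesis using G' span_mono[of G' G] unfolding G_def by blast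
      next
        case False
        then obtain u j where uj: "u dvd 1" "k = u * pi ^ j" using dvr by blast
        then have "P j" unfolding P_def using k by blast
        then have "k0 \<le> j" unfolding k0_def by (rule Least_le)
        define c where "c = u * pi ^ (j - k0)"
        have kc: "k = c * pi ^ k0" unfolding c_def uj(2) using \<open>k0 \<le> j\<close>
          by (simp add: mult.assoc power_add[symmetric])
        have eq: "z - smul c z0 = (z - smul k f) - smul c (smul v y0)"
          unfolding z0eq kc by (simp add: scale_right_distrib)
        have "z - smul c z0 \<in> span F"
          unfolding eq using k(1) y0(1) span_diff span_scale by blast
        moreover have "z - smul c z0 \<in> N"
          using z z0N insert.prems(1) subspace_diff subspace_scale by blast
        ultimately have "z - smul c z0 \<in> span G'" using G' unfolding N'_def by blast
        then have "z - smul c z0 \<in> span G" using span_mono[of G' G] unfolding G_def by blast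
        moreover have "smul c z0 \<in> span G" unfolding G_def by (intro span_scale span_base) simp
        ultimately have "(z - smul c z0) + smul c z0 \<in> span G" by (rule span_add)
        then show ?thesis by simp
      qed
    qed
    moreover have "G \<subseteq> N" unfolding G_def using G' z0N unfolding N'_def by blast
    moreover have "finite G" unfolding G_def using G' by simp
    ultimately show ?thesis by blast
  qed
qed

end


locale dagB = dag smul pi for smul :: "'a::idom \<Rightarrow> 'b::ring \<Rightarrow> 'b" and pi +
  fixes B :: "'b set set"
  assumes dvr: "\<And>x. x \<noteq> 0 \<Longrightarrow> \<exists>u n. u dvd 1 \<and> x = u * pi ^ n"
    and bor: "bornology B"
    and bsub: "\<And>S. S \<in> B \<Longrightarrow> \<exists>T\<in>B. S \<subseteq> T \<and> subspace T"
    and bmul: "\<And>S T. S \<in> B \<Longrightarrow> T \<in> B \<Longrightarrow> smulset S T \<in> B"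
    and bcomp: "\<And>S. S \<in> B \<Longrightarrow> \<exists>T\<in>B. S \<subseteq> T \<and> subspace T \<and> padic_complete smul pi T"
    and btf: "\<And>S. S \<in> B \<Longrightarrow> {x. smul pi x \<in> S} \<in> B"
    and bsd: "\<And>S. S \<in> B \<Longrightarrow> span (\<Union>i. pmul smul pi i (setpow S (Suc i))) \<in> B"
begin

lemma b_fin: "finite F \<Longrightarrow> F \<in> B" using bor by (simp add: bornology_def)
lemma b_un: "S \<in> B \<Longrightarrow> T \<in> B \<Longrightarrow> S \<union> T \<in> B" using bor by (simp add: bornology_def)
lemma b_sub: "S \<in> B \<Longrightarrow> T \<subseteq> S \<Longrightarrow> T \<in> B"
proof -
  assume "S \<in> B" "T \<subseteq> S"
  moreover have "\<forall>S\<in>B. \<forall>T. T \<subseteq> S \<longrightarrow> T \<in> B" using bor by (simp add: bornology_def)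
  ultimately show ?thesis by blast
qed

lemma b_two: assumes "X \<in> B" "Y \<in> B" shows "\<exists>Z\<in>B. subspace Z \<and> X \<subseteq> Z \<and> Y \<subseteq> Z"
proof -
  have "X \<union> Y \<in> B" using assms b_un by simp
  then obtain Z where "Z \<in> B" "X \<union> Y \<subseteq> Z" "subspace Z" using bsub by blast
  then show ?thesis by blast
qed

definition cpt where "cpt S \<longleftrightarrow> compactoid smul pi B S"

lemma cpt_iff: "cpt S \<longleftrightarrow> (\<exists>T\<in>B. subspace T \<and> S \<subseteq> T \<and>
     (\<forall>n. \<exists>F. finite F \<and> F \<subseteq> T \<and> S \<subseteq> msum (span F) (pmul smul pi n T)))"
  unfolding cpt_def compactoid_def msum_def by simp

lemma msumE: "x \<in> msum A C \<Longrightarrow> (\<And>a c. a \<in> A \<Longrightarrow> c \<in> C \<Longrightarrow> x = a + c \<Longrightarrow> P) \<Longrightarrow> P"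
  unfolding msum_def by blast

lemma msumI: "a \<in> A \<Longrightarrow> c \<in> C \<Longrightarrow> a + c \<in> msum A C"
  unfolding msum_def by blast

lemma cpt_finite: assumes "finite F" shows "cpt F"
proof -
  obtain T where T: "T \<in> B" "F \<subseteq> T" "subspace T" using bsub b_fin assms by blast
  have "F \<subseteq> msum (span F) (pmul smul pi n T)" for n
  proof
    fix x assume "x \<in> F"
    moreover have "0 \<in> pmul smul pi n T" using pmulI[of 0 T n] T subspace_0 by simp
    ultimately show "x \<in> msum (span F) (pmul smul pi n T)"
      using msumI[of x "span F" 0] span_base by auto
  qed
  then show ?thesis unfolding cpt_iff using T assms by blast
qed

lemma cpt_subset: "cpt S \<Longrightarrow> S' \<subseteq> S \<Longrightarrow> cpt S'"
  unfolding cpt_iff by (meson order_trans)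

lemma cpt_union: assumes "cpt S1" "cpt S2" shows "cpt (S1 \<union> S2)"
proof -
  obtain T1 where T1: "T1 \<in> B" "subspace T1" "S1 \<subseteq> T1"
    "\<And>n. \<exists>F. finite F \<and> F \<subseteq> T1 \<and> S1 \<subseteq> msum (span F) (pmul smul pi n T1)"
    using assms(1) unfolding cpt_iff by blast
  obtain T2 where T2: "T2 \<in> B" "subspace T2" "S2 \<subseteq> T2"
    "\<And>n. \<exists>F. finite F \<and> F \<subseteq> T2 \<and> S2 \<subseteq> msum (span F) (pmul smul pi n T2)"
    using assms(2) unfolding cpt_iff by blast
  obtain Z where Z: "Z \<in> B" "subspace Z" "T1 \<subseteq> Z" "T2 \<subseteq> Z" using b_two[OF T1(1) T2(1)] by blast
  have "\<exists>F. finite F \<and> F \<subseteq> Z \<and> S1 \<union> S2 \<subseteq> msum (span F) (pmul smul pi n Z)" for n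
  proof -
    obtain F1 where F1: "finite F1" "F1 \<subseteq> T1" "S1 \<subseteq> msum (span F1) (pmul smul pi n T1)" using T1(4) by blast
    obtain F2 where F2: "finite F2" "F2 \<subseteq> T2" "S2 \<subseteq> msum (span F2) (pmul smul pi n T2)" using T2(4) by blast
    have "msum (span F1) (pmul smul pi n T1) \<subseteq> msum (span (F1 \<union> F2)) (pmul smul pi n Z)"
      by (intro msum_mono span_mono pmul_mono) (use Z in auto)
    moreover have "msum (span F2) (pmul smul pi n T2) \<subseteq> msum (span (F1 \<union> F2)) (pmul smul pi n Z)"
      by (intro msum_mono span_mono pmul_mono) (use Z in auto)
    ultimately show ?thesis using F1 F2 Z by (intro exI[of _ "F1 \<union> F2"]) auto
  qed
  then show ?thesis unfolding cpt_iff using Z T1 T2 by blast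
qed

lemma cpt_mul: assumes "cpt S1" "cpt S2" shows "cpt (smulset S1 S2)"
proof -
  obtain T1 where T1: "T1 \<in> B" "subspace T1" "S1 \<subseteq> T1"
    "\<And>n. \<exists>F. finite F \<and> F \<subseteq> T1 \<and> S1 \<subseteq> msum (span F) (pmul smul pi n T1)"
    using assms(1) unfolding cpt_iff by blast
  obtain T2 where T2: "T2 \<in> B" "subspace T2" "S2 \<subseteq> T2"
    "\<And>n. \<exists>F. finite F \<and> F \<subseteq> T2 \<and> S2 \<subseteq> msum (span F) (pmul smul pi n T2)"
    using assms(2) unfolding cpt_iff by blast
  obtain Z where Z: "Z \<in> B" "subspace Z" "smulset T1 T2 \<subseteq> Z"
    using bsub[OF bmul[OF T1(1) T2(1)]] by blast
  have "\<exists>F. finite F \<and> F \<subseteq> Z \<and> smulset S1 S2 \<subseteq> msum (span F) (pmul smul pi n Z)" for n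
  proof -
    obtain F1 where F1: "finite F1" "F1 \<subseteq> T1" "S1 \<subseteq> msum (span F1) (pmul smul pi n T1)" using T1(4) by blast
    obtain F2 where F2: "finite F2" "F2 \<subseteq> T2" "S2 \<subseteq> msum (span F2) (pmul smul pi n T2)" using T2(4) by blast
    have sF1: "span F1 \<subseteq> T1" using F1 T1 span_minimal by blast
    have sF2: "span F2 \<subseteq> T2" using F2 T2 span_minimal by blast
    have inZ: "x * y \<in> Z" if "x \<in> T1" "y \<in> T2" for x y
      using that Z(3) unfolding smulset_def by blast
    have "smulset S1 S2 \<subseteq> msum (span (smulset F1 F2)) (pmul smul pi n Z)"
    proof
      fix x assume "x \<in> smulset S1 S2"
      then obtain s s' where x: "x = s * s'" "s \<in> S1" "s' \<in> S2" unfolding smulset_def by blast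
      obtain f t where ft: "f \<in> span F1" "t \<in> T1" "s = f + smul (pi ^ n) t"
        using x(2) F1(3) by (auto simp: msum_def pmul_def)
      obtain f' t' where ft': "f' \<in> span F2" "t' \<in> T2" "s' = f' + smul (pi ^ n) t'"
        using x(3) F2(3) by (auto simp: msum_def pmul_def)
      have eq: "x = f * f' + smul (pi ^ n) (t * f' + f * t' + smul (pi ^ n) (t * t'))"
      proof -
        have "x = f * f' + f * smul (pi ^ n) t' + smul (pi ^ n) t * f' + smul (pi ^ n) t * smul (pi ^ n) t'"
          unfolding x(1) ft(3) ft'(3) by (simp add: distrib_left distrib_right add.assoc)
        also have "\<dots> = f * f' + smul (pi ^ n) (f * t') + smul (pi ^ n) (t * f') + smul (pi ^ n) (smul (pi ^ n) (t * t'))"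
          by (simp only: mc1[symmetric] mc2[symmetric])
        also have "\<dots> = f * f' + smul (pi ^ n) (t * f' + f * t' + smul (pi ^ n) (t * t'))"
          by (simp only: scale_right_distrib add.assoc add.left_commute[of "smul (pi ^ n) (f * t')"])
        finally show ?thesis .
      qed
      have "f * f' \<in> span (smulset F1 F2)" using span_mul ft(1) ft'(1) by blast
      moreover have "t * f' + f * t' + smul (pi ^ n) (t * t') \<in> Z"
      proof -
        have "f \<in> T1" "f' \<in> T2" using ft(1) ft'(1) sF1 sF2 by blast+
        then have "t * f' \<in> Z" "f * t' \<in> Z" "t * t' \<in> Z" using inZ ft ft' by auto
        then show ?thesis using Z(2) subspace_add subspace_scale by blast
      qed
      ultimately show "x \<in> msum (span (smulset F1 F2)) (pmul smul pi n Z)"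
        unfolding eq by (intro msumI pmulI)
    qed
    moreover have "smulset F1 F2 \<subseteq> Z" using F1 F2 Z(3) smulset_mono[of F1 T1 F2 T2] by blast
    moreover have "finite (smulset F1 F2)" using F1 F2 finite_smulset by blast
    ultimately show ?thesis by blast
  qed
  moreover have "smulset S1 S2 \<subseteq> Z" using Z(3) smulset_mono[of S1 T1 S2 T2] T1 T2 by blast
  ultimately show ?thesis unfolding cpt_iff using Z by blast
qed


lemma msum_sub: "subspace W \<Longrightarrow> msum W W \<subseteq> W"
  unfolding msum_def using subspace_add by blast

lemma cpt_complete: assumes "cpt S"
  shows "\<exists>C. cpt C \<and> S \<subseteq> C \<and> subspace C \<and> padic_complete smul pi C"
proof -
  obtain T where T: "T \<in> B" "subspace T" "S \<subseteq> T"
    "\<And>n. \<exists>F. finite F \<and> F \<subseteq> T \<and> S \<subseteq> msum (span F) (pmul smul pi n T)"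
    using assms(1) unfolding cpt_iff by blast
  obtain T' where T': "T' \<in> B" "T \<subseteq> T'" "subspace T'" "padic_complete smul pi T'"
    using bcomp[OF T(1)] by blast
  define M where "M = span S"
  have MT': "M \<subseteq> T'" unfolding M_def using T T' span_minimal by blast
  define good where "good X \<longleftrightarrow> X \<subseteq> T' \<and> X \<subseteq> msum M (pmul smul pi 1 X)" for X
  define C where "C = {x. \<exists>X. good X \<and> x \<in> X}"
  have maxC: "X \<subseteq> C" if "good X" for X using that unfolding C_def by blast
  have goodC: "good C"
  proof -
    have "C \<subseteq> T'" unfolding C_def good_def by blast
    moreover have "C \<subseteq> msum M (pmul smul pi 1 C)"
    proof
      fix x assume "x \<in> C"
      then obtain X where X: "good X" "x \<in> X" unfolding C_def by blast
      then have "x \<in> msum M (pmul smul pi 1 X)" unfolding good_def by blast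
      moreover have "msum M (pmul smul pi 1 X) \<subseteq> msum M (pmul smul pi 1 C)"
        using maxC[OF X(1)] by (intro msum_mono pmul_mono) auto
      ultimately show "x \<in> msum M (pmul smul pi 1 C)" by blast
    qed
    ultimately show ?thesis unfolding good_def by blast
  qed
  have decC: "\<exists>m c'. m \<in> M \<and> c' \<in> C \<and> x = m + smul pi c'" if "x \<in> C" for x
  proof -
    have "x \<in> msum M (pmul smul pi 1 C)" using goodC that unfolding good_def by blast
    then show ?thesis by (auto simp: msum_def pmul_def)
  qed
  have CT': "C \<subseteq> T'" using goodC unfolding good_def by blast
  have M0: "0 \<in> M" unfolding M_def by (rule span_zero)
  have MC: "M \<subseteq> C"
  proof (rule maxC)
    have "M \<subseteq> msum M (pmul smul pi 1 M)"
    proof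
      fix x assume "x \<in> M"
      then show "x \<in> msum M (pmul smul pi 1 M)"
        using msumI[of x M "smul (pi ^ 1) 0"] pmulI[OF M0, of 1] by simp
    qed
    then show "good M" unfolding good_def using MT' by blast
  qed
  have subC: "subspace C"
    unfolding subspace_def
  proof (intro conjI ballI allI)
    show "0 \<in> C" using MC M0 by blast
  next
    fix a b assume ab: "a \<in> C" "b \<in> C"
    have "good (msum C C)"
      unfolding good_def
    proof
      show "msum C C \<subseteq> T'" using CT' T'(3) subspace_add unfolding msum_def by blast
      show "msum C C \<subseteq> msum M (pmul smul pi 1 (msum C C))"
      proof
        fix z assume "z \<in> msum C C"
        then obtain a b where z: "a \<in> C" "b \<in> C" "z = a + b" unfolding msum_def by blast
        obtain m1 c1 where 1: "m1 \<in> M" "c1 \<in> C" "a = m1 + smul pi c1" using decC z(1) by blast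
        obtain m2 c2 where 2: "m2 \<in> M" "c2 \<in> C" "b = m2 + smul pi c2" using decC z(2) by blast
        have "z = (m1 + m2) + smul (pi ^ 1) (c1 + c2)"
          unfolding z(3) 1(3) 2(3) by (simp add: scale_right_distrib add_ac)
        moreover have "m1 + m2 \<in> M" unfolding M_def using 1 2 span_add unfolding M_def by blast
        moreover have "c1 + c2 \<in> msum C C" using 1(2) 2(2) by (rule msumI)
        ultimately show "z \<in> msum M (pmul smul pi 1 (msum C C))" by (metis msumI pmulI)
      qed
    qed
    then have "msum C C \<subseteq> C" by (rule maxC)
    then show "a + b \<in> C" using ab msumI by blast
  next
    fix k a assume a: "a \<in> C"
    have "good (smul k ` C)"
      unfolding good_def
    proof
      show "smul k ` C \<subseteq> T'" using CT' T'(3) subspace_scale by blast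
      show "smul k ` C \<subseteq> msum M (pmul smul pi 1 (smul k ` C))"
      proof
        fix z assume "z \<in> smul k ` C"
        then obtain a where z: "a \<in> C" "z = smul k a" by blast
        obtain m1 c1 where 1: "m1 \<in> M" "c1 \<in> C" "a = m1 + smul pi c1" using decC z(1) by blast
        have "z = smul k m1 + smul (pi ^ 1) (smul k c1)"
          unfolding z(2) 1(3) by (simp add: scale_right_distrib mult.commute)
        moreover have "smul k m1 \<in> M" unfolding M_def using 1 span_scale unfolding M_def by blast
        moreover have "smul k c1 \<in> smul k ` C" using 1 by blast
        ultimately show "z \<in> msum M (pmul smul pi 1 (smul k ` C))" by (metis msumI pmulI)
      qed
    qed
    then have "smul k ` C \<subseteq> C" by (rule maxC)
    then show "smul k a \<in> C" using a by blast
  qed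
  have Cn: "C \<subseteq> msum M (pmul smul pi n T')" for n
  proof (induction n)
    case 0
    show ?case
    proof
      fix x assume "x \<in> C"
      then show "x \<in> msum M (pmul smul pi 0 T')" using msumI[OF M0, of x] CT' pmul_0 by auto
    qed
  next
    case (Suc n)
    show ?case
    proof
      fix x assume "x \<in> C"
      then obtain m c' where 1: "m \<in> M" "c' \<in> C" "x = m + smul pi c'" using decC by blast
      then obtain m' t where 2: "m' \<in> M" "t \<in> T'" "c' = m' + smul (pi ^ n) t"
        using Suc by (auto simp: msum_def pmul_def)
      have "x = (m + smul pi m') + smul (pi ^ Suc n) t"
        unfolding 1(3) 2(3) by (simp add: scale_right_distrib add.assoc)
      moreover have "m + smul pi m' \<in> M" unfolding M_def using 1 2 span_add span_scale unfolding M_def by blast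
      ultimately show "x \<in> msum M (pmul smul pi (Suc n) T')" using 2(2) by (metis msumI pmulI)
    qed
  qed
  have "cpt C"
    unfolding cpt_iff
  proof (intro bexI[of _ T'] conjI allI)
    show "T' \<in> B" "subspace T'" "C \<subseteq> T'" using T' CT' by auto
    fix n
    obtain F where F: "finite F" "F \<subseteq> T" "S \<subseteq> msum (span F) (pmul smul pi n T)" using T(4) by blast
    define W where "W = msum (span F) (pmul smul pi n T')"
    have subW: "subspace W" unfolding W_def using subspace_msum subspace_pmul T'(3) by blast
    have "S \<subseteq> W" unfolding W_def using F(3) pmul_mono[OF T'(2)] msum_mono by blast
    then have MW: "M \<subseteq> W" unfolding M_def using subW span_minimal by blast
    have PW: "pmul smul pi n T' \<subseteq> W" unfolding W_def using msumI[OF span_zero] by fastforce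
    have "C \<subseteq> msum W W" using Cn[of n] msum_mono[OF MW PW] by blast
    also have "\<dots> \<subseteq> W" using msum_sub subW by blast
    finally have "C \<subseteq> W" .
    then show "\<exists>F. finite F \<and> F \<subseteq> T' \<and> C \<subseteq> msum (span F) (pmul smul pi n T')"
      using F T'(2) unfolding W_def by blast
  qed
  moreover have "S \<subseteq> C" using MC span_superset unfolding M_def by blast
  moreover have "padic_complete smul pi C"
    unfolding padic_complete_def
  proof (intro conjI allI impI)
    have "(\<Inter>n. pmul smul pi n C) \<subseteq> (\<Inter>n. pmul smul pi n T')" using pmul_mono[OF CT'] by blast
    then show "(\<Inter>n. pmul smul pi n C) \<subseteq> {0}" using T'(4) unfolding padic_complete_def by blast
  next
    fix x :: "nat \<Rightarrow> 'b"
    assume x: "(\<forall>n. x n \<in> C) \<and> (\<forall>n. x (Suc n) - x n \<in> pmul smul pi n C)"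
    have "(\<forall>n. x n \<in> T') \<and> (\<forall>n. x (Suc n) - x n \<in> pmul smul pi n T')"
      using x CT' pmul_mono[OF CT'] by blast
    then obtain y where y: "y \<in> T'" "\<And>n. y - x n \<in> pmul smul pi n T'"
      using T'(4) unfolding padic_complete_def by blast
    have "\<forall>n. \<exists>w. w \<in> T' \<and> y - x n = smul (pi ^ n) w" using y(2) by (auto simp: pmul_def)
    then obtain w where w: "\<And>n. w n \<in> T'" "\<And>n. y - x n = smul (pi ^ n) (w n)" by metis
    have "\<forall>n. \<exists>c. c \<in> C \<and> x (Suc n) - x n = smul (pi ^ n) c" using x by (auto simp: pmul_def)
    then obtain c where c: "\<And>n. c n \<in> C" "\<And>n. x (Suc n) - x n = smul (pi ^ n) (c n)" by metis
    have rec: "w n = smul pi (w (Suc n)) + c n" for n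
    proof (rule scale_inj[of n])
      have "smul (pi ^ n) (w n) = (y - x (Suc n)) + (x (Suc n) - x n)" using w(2)[of n] by simp
      also have "\<dots> = smul (pi ^ Suc n) (w (Suc n)) + smul (pi ^ n) (c n)" using w(2) c(2) by simp
      also have "\<dots> = smul (pi ^ n) (smul pi (w (Suc n)) + c n)"
        by (simp add: scale_right_distrib mult.commute)
      finally show "smul (pi ^ n) (w n) = smul (pi ^ n) (smul pi (w (Suc n)) + c n)" .
    qed
    define X where "X = C \<union> {a + w n | a n. a \<in> C}"
    have "good X"
      unfolding good_def
    proof
      show "X \<subseteq> T'" unfolding X_def using CT' w(1) T'(3) subspace_add by blast
      show "X \<subseteq> msum M (pmul smul pi 1 X)"
      proof
        fix z assume "z \<in> X"
        then consider "z \<in> C" | a n where "a \<in> C" "z = a + w n" unfolding X_def by blast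
        then show "z \<in> msum M (pmul smul pi 1 X)"
        proof cases
          case 1
          then have "z \<in> msum M (pmul smul pi 1 C)" using goodC unfolding good_def by blast
          moreover have "msum M (pmul smul pi 1 C) \<subseteq> msum M (pmul smul pi 1 X)"
            unfolding X_def by (intro msum_mono pmul_mono) auto
          ultimately show ?thesis by blast
        next
          case (2 a n)
          have "a + c n \<in> C" using 2 c(1) subC subspace_add by blast
          then obtain m c' where mc: "m \<in> M" "c' \<in> C" "a + c n = m + smul pi c'" using decC by blast
          have "z = m + smul (pi ^ 1) (c' + w (Suc n))"
          proof -
            have "z = (a + c n) + smul pi (w (Suc n))" using 2(2) rec[of n] by (simp add: add_ac)
            then show ?thesis using mc(3) by (simp add: scale_right_distrib add_ac)
          qed
          moreover have "c' + w (Suc n) \<in> X" unfolding X_def using mc(2) by blast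
          ultimately show ?thesis using mc(1) by (metis msumI pmulI)
        qed
      qed
    qed
    then have XC: "X \<subseteq> C" by (rule maxC)
    have wC: "w n \<in> C" for n
    proof -
      have "0 + w n \<in> X" unfolding X_def using subC subspace_0 by blast
      then show ?thesis using XC by auto
    qed
    have "y = x 0 + w 0" using w(2)[of 0] by (simp add: algebra_simps)
    then have "y \<in> C" using x wC subC subspace_add by metis
    moreover have "y - x n \<in> pmul smul pi n C" for n using w(2)[of n] wC pmulI by metis
    ultimately show "\<exists>y\<in>C. \<forall>n. y - x n \<in> pmul smul pi n C" by blast
  qed
  ultimately show ?thesis using subC by blast
qed


lemma subspace_scale_image: assumes A: "subspace A" shows "subspace (smul a ` A)"
  unfolding subspace_def
proof (intro conjI ballI allI)
  show "0 \<in> smul a ` A" using A subspace_0 by (metis image_eqI scale_zero_right)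
next
  fix x y assume "x \<in> smul a ` A" "y \<in> smul a ` A"
  then obtain p q where "p \<in> A" "q \<in> A" "x = smul a p" "y = smul a q" by blast
  then show "x + y \<in> smul a ` A"
    using A subspace_add by (metis image_eqI scale_right_distrib)
next
  fix c x assume "x \<in> smul a ` A"
  then obtain p where "p \<in> A" "x = smul a p" by blast
  then show "smul c x \<in> smul a ` A"
    using A subspace_scale by (metis image_eqI scale_left_commute)
qed

lemma cpt_tf: assumes "cpt S" shows "cpt {x. smul pi x \<in> S}"
proof -
  obtain T where T: "T \<in> B" "subspace T" "S \<subseteq> T"
    "\<And>n. \<exists>F. finite F \<and> F \<subseteq> T \<and> S \<subseteq> msum (span F) (pmul smul pi n T)"
    using assms(1) unfolding cpt_iff by blast
  obtain U where U: "U \<in> B" "subspace U" "T \<subseteq> U" "{x. smul pi x \<in> T} \<subseteq> U"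
    using b_two[OF T(1) btf[OF T(1)]] by blast
  define Q where "Q = {x. smul pi x \<in> S}"
  have QU: "Q \<subseteq> U" unfolding Q_def using T(3) U(4) by blast
  have "\<exists>H. finite H \<and> H \<subseteq> U \<and> Q \<subseteq> msum (span H) (pmul smul pi n U)" for n
  proof -
    obtain F where F: "finite F" "F \<subseteq> T" "S \<subseteq> msum (span F) (pmul smul pi (Suc n) T)"
      using T(4) by blast
    define N where "N = {f \<in> span F. \<exists>u\<in>U. f = smul pi u}"
    have subN: "subspace N"
      unfolding subspace_def N_def
    proof (intro conjI ballI allI)
      show "0 \<in> {f \<in> span F. \<exists>u\<in>U. f = smul pi u}"
        using span_zero U(2) subspace_0 by (metis (mono_tags, lifting) mem_Collect_eq scale_zero_right)
    next
      fix a b assume "a \<in> {f \<in> span F. \<exists>u\<in>U. f = smul pi u}" "b \<in> {f \<in> span F. \<exists>u\<in>U. f = smul pi u}"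
      then obtain ua ub where "a \<in> span F" "b \<in> span F" "ua \<in> U" "ub \<in> U" "a = smul pi ua" "b = smul pi ub" by blast
      moreover have "a + b \<in> span F" using \<open>a \<in> span F\<close> \<open>b \<in> span F\<close> span_add by blast
      ultimately show "a + b \<in> {f \<in> span F. \<exists>u\<in>U. f = smul pi u}"
        using U(2) subspace_add by (auto simp: scale_right_distrib[symmetric] intro!: bexI[of _ "ua + ub"])
    next
      fix c a assume "a \<in> {f \<in> span F. \<exists>u\<in>U. f = smul pi u}"
      then obtain ua where "a \<in> span F" "ua \<in> U" "a = smul pi ua" by blast
      moreover have "smul c a \<in> span F" using \<open>a \<in> span F\<close> span_scale by blast
      moreover have "smul c a = smul pi (smul c ua)" using \<open>a = smul pi ua\<close> scale_left_commute by simp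
      moreover have "smul c ua \<in> U" using \<open>ua \<in> U\<close> U(2) subspace_scale by blast
      ultimately show "smul c a \<in> {f \<in> span F. \<exists>u\<in>U. f = smul pi u}" by blast
    qed
    have "N \<subseteq> span F" unfolding N_def by blast
    then obtain G where G: "finite G" "G \<subseteq> N" "N \<subseteq> span G" using noeth[OF dvr F(1) subN] by blast
    have "\<forall>g\<in>G. \<exists>h. h \<in> U \<and> g = smul pi h" using G(2) unfolding N_def by blast
    then obtain h where h: "\<And>g. g \<in> G \<Longrightarrow> h g \<in> U \<and> g = smul pi (h g)" by metis
    define H where "H = h ` G"
    have HU: "H \<subseteq> U" unfolding H_def using h by blast
    have "G \<subseteq> smul pi ` span H"
    proof
      fix g assume "g \<in> G"
      then show "g \<in> smul pi ` span H" using h[of g] span_base unfolding H_def by blast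
    qed
    then have GR: "span G \<subseteq> smul pi ` span H"
      using span_minimal subspace_scale_image subspace_span by blast
    have "Q \<subseteq> msum (span H) (pmul smul pi n U)"
    proof
      fix x assume x: "x \<in> Q"
      then have "smul pi x \<in> S" unfolding Q_def by blast
      then obtain f t where ft: "f \<in> span F" "t \<in> T" "smul pi x = f + smul (pi ^ Suc n) t"
        using F(3) by (auto simp: msum_def pmul_def)
      define u where "u = x - smul (pi ^ n) t"
      have uU: "u \<in> U" unfolding u_def using x QU ft(2) U(2,3) subspace_diff subspace_scale by blast
      have "smul pi u = f" unfolding u_def using ft(3) by (simp add: scale_right_diff_distrib)
      then have "f \<in> N" unfolding N_def using ft(1) uU by blast
      then obtain h' where h': "h' \<in> span H" "f = smul pi h'" using G(3) GR by blast
      have "smul (pi ^ 1) u = smul (pi ^ 1) h'" using \<open>smul pi u = f\<close> h'(2) by simp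
      then have "u = h'" by (rule scale_inj)
      then have "x = h' + smul (pi ^ n) t" unfolding u_def by (simp add: algebra_simps)
      then show "x \<in> msum (span H) (pmul smul pi n U)" using h'(1) ft(2) U(3)
        by (metis msumI pmulI subsetD)
    qed
    moreover have "finite H" unfolding H_def using G(1) by simp
    ultimately show ?thesis using HU by blast
  qed
  then show ?thesis unfolding cpt_iff Q_def[symmetric] using U QU by blast
qed


lemma subspace_preimage: assumes Z: "subspace Z" shows "subspace {w. smul c w \<in> Z}"
  unfolding subspace_def
proof (intro conjI ballI allI)
  show "0 \<in> {w. smul c w \<in> Z}" using Z subspace_0 by simp
next
  fix x y assume "x \<in> {w. smul c w \<in> Z}" "y \<in> {w. smul c w \<in> Z}"
  then show "x + y \<in> {w. smul c w \<in> Z}" using Z subspace_add by (simp add: scale_right_distrib)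
next
  fix d x assume "x \<in> {w. smul c w \<in> Z}"
  then show "smul d x \<in> {w. smul c w \<in> Z}" using Z subspace_scale[of Z "smul c x" d]
    by (simp add: mult.commute)
qed

lemma scale_span: "x \<in> span X \<Longrightarrow> smul c x \<in> span (smul c ` X)"
proof -
  assume "x \<in> span X"
  moreover have "span X \<subseteq> {w. smul c w \<in> span (smul c ` X)}"
    by (rule span_minimal) (auto intro: span_base subspace_preimage)
  ultimately show ?thesis by blast
qed

lemma cpt_sd: assumes "cpt S" shows "cpt (span (\<Union>i. pmul smul pi i (setpow S (Suc i))))"
proof -
  obtain T where T: "T \<in> B" "subspace T" "S \<subseteq> T"
    "\<And>n. \<exists>F. finite F \<and> F \<subseteq> T \<and> S \<subseteq> msum (span F) (pmul smul pi n T)"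
    using assms(1) unfolding cpt_iff by blast
  define P where "P = T \<union> smulset T T"
  have PB: "P \<in> B" unfolding P_def using b_un bmul T(1) by blast
  define Z where "Z = span (\<Union>j. pmul smul pi j (setpow P (Suc j)))"
  have ZB: "Z \<in> B" unfolding Z_def using bsd[OF PB] .
  have subZ: "subspace Z" unfolding Z_def by simp
  have TP: "T \<subseteq> P" unfolding P_def by blast
  have h1: "smul (pi ^ i) p \<in> Z" if "p \<in> setpow P (Suc i)" for i p
    unfolding Z_def using that by (intro span_base) (auto simp: pmul_def)
  have h2: "smul (pi ^ i) w \<in> Z" if "w \<in> span (setpow T (Suc i))" for i w
  proof -
    have "span (setpow T (Suc i)) \<subseteq> {w. smul (pi ^ i) w \<in> Z}"
      using h1 setpow_mono[OF TP] subspace_preimage[OF subZ]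
      by (intro span_minimal) auto
    then show ?thesis using that by blast
  qed
  define Y where "Y = span (\<Union>i. pmul smul pi i (setpow S (Suc i)))"
  have YZ: "Y \<subseteq> Z" unfolding Y_def Z_def
    using setpow_mono[of S P] T(3) TP by (intro span_mono UN_mono pmul_mono) auto
  have "\<exists>G. finite G \<and> G \<subseteq> Z \<and> Y \<subseteq> msum (span G) (pmul smul pi n Z)" for n
  proof -
    obtain F where F: "finite F" "F \<subseteq> T" "S \<subseteq> msum (span F) (pmul smul pi n T)" using T(4) by blast
    have sFT: "span F \<subseteq> T" using F T span_minimal by blast
    have P1: "setpow S (Suc k) \<subseteq> msum (span (setpow F (Suc k))) (pmul smul pi n (span (setpow T (Suc k))))" for k
    proof (induction k)
      case 0
      have "msum (span F) (pmul smul pi n T) \<subseteq> msum (span F) (pmul smul pi n (span T))"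
        by (intro msum_mono pmul_mono span_superset) auto
      then show ?case using F(3) by simp
    next
      case (Suc k)
      show ?case
      proof
        fix x assume "x \<in> setpow S (Suc (Suc k))"
        then obtain x' s where xs: "x = x' * s" "x' \<in> setpow S (Suc k)" "s \<in> S"
          by (auto simp: setpow_SS smulset_def)
        obtain a' w' where aw: "a' \<in> span (setpow F (Suc k))" "w' \<in> span (setpow T (Suc k))"
          "x' = a' + smul (pi ^ n) w'"
          using Suc xs(2) by (force simp: msum_def pmul_def)
        obtain f t where ft: "f \<in> span F" "t \<in> T" "s = f + smul (pi ^ n) t"
          using xs(3) F(3) by (auto simp: msum_def pmul_def)
        have eq: "x = a' * f + smul (pi ^ n) (w' * f + a' * t + smul (pi ^ n) (w' * t))"
        proof -
          have "x = a' * f + a' * smul (pi ^ n) t + smul (pi ^ n) w' * f + smul (pi ^ n) w' * smul (pi ^ n) t"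
            unfolding xs(1) aw(3) ft(3) by (simp add: distrib_left distrib_right add.assoc)
          also have "\<dots> = a' * f + smul (pi ^ n) (a' * t) + smul (pi ^ n) (w' * f) + smul (pi ^ n) (smul (pi ^ n) (w' * t))"
            by (simp only: mc1[symmetric] mc2[symmetric])
          also have "\<dots> = a' * f + smul (pi ^ n) (w' * f + a' * t + smul (pi ^ n) (w' * t))"
            by (simp only: scale_right_distrib add.assoc add.left_commute[of "smul (pi ^ n) (a' * t)"])
          finally show ?thesis .
        qed
        have ss: "setpow X (Suc (Suc k)) = smulset (setpow X (Suc k)) X" for X :: "'b set"
          by (rule setpow_SS)
        have fT: "f \<in> span T" using ft(1) sFT span_superset by blast
        have tT: "t \<in> span T" using ft(2) span_superset by blast
        have aT: "a' \<in> span (setpow T (Suc k))" using aw(1) span_mono[OF setpow_mono[OF F(2)]] by blast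
        have "a' * f \<in> span (setpow F (Suc (Suc k)))" unfolding ss using span_mul aw(1) ft(1) by blast
        moreover have "w' * f + a' * t + smul (pi ^ n) (w' * t) \<in> span (setpow T (Suc (Suc k)))"
          unfolding ss using span_mul[OF aw(2) fT] span_mul[OF aT tT] span_mul[OF aw(2) tT]
          by (intro span_add span_scale) auto
        ultimately show "x \<in> msum (span (setpow F (Suc (Suc k)))) (pmul smul pi n (span (setpow T (Suc (Suc k)))))"
          unfolding eq by (intro msumI pmulI)
      qed
    qed
    define G where "G = (\<Union>i<2*n. pmul smul pi i (setpow F (Suc i)))"
    have finG: "finite G" unfolding G_def pmul_def using F(1) finite_setpow by blast
    have GZ: "G \<subseteq> Z" unfolding G_def pmul_def using h1 setpow_mono[of F P] F(2) TP by blast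
    define W where "W = msum (span G) (pmul smul pi n Z)"
    have subW: "subspace W" unfolding W_def using subspace_msum subspace_pmul subZ by blast
    have pZ0: "0 \<in> pmul smul pi n Z" using pmulI[of 0 Z n] subZ subspace_0 by simp
    have PW: "pmul smul pi n Z \<subseteq> W" unfolding W_def using msumI[OF span_zero] by fastforce
    have P3: "smul (pi ^ i) f \<in> W" if "f \<in> setpow F (Suc i)" for i f
    proof (cases "i < 2 * n")
      case True
      then have "smul (pi ^ i) f \<in> G" unfolding G_def using that by (auto simp: pmul_def)
      then show ?thesis unfolding W_def using msumI[OF span_base pZ0] by fastforce
    next
      case False
      have "f \<in> setpow P (Suc (i div 2))"
        using that setpow_mono[OF F(2), of "Suc i"] setpow_half[of T i] unfolding P_def by blast
      then have z: "smul (pi ^ (i div 2)) f \<in> Z" by (rule h1)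
      have ii: "i = n + ((i - n - i div 2) + i div 2)" using False by linarith
      have "smul (pi ^ i) f = smul (pi ^ n) (smul (pi ^ (i - n - i div 2)) (smul (pi ^ (i div 2)) f))"
        by (subst ii) (simp add: power_add mult.assoc)
      moreover have "smul (pi ^ (i - n - i div 2)) (smul (pi ^ (i div 2)) f) \<in> Z"
        using z subZ subspace_scale by blast
      ultimately show ?thesis using PW pmulI[of _ Z n] by (metis subsetD)
    qed
    have "(\<Union>i. pmul smul pi i (setpow S (Suc i))) \<subseteq> W"
    proof
      fix y assume "y \<in> (\<Union>i. pmul smul pi i (setpow S (Suc i)))"
      then obtain i x where y: "x \<in> setpow S (Suc i)" "y = smul (pi ^ i) x" by (auto simp: pmul_def)
      obtain a w where aw: "a \<in> span (setpow F (Suc i))" "w \<in> span (setpow T (Suc i))"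
        "x = a + smul (pi ^ n) w"
        using P1[of i] y(1) by (force simp: msum_def pmul_def)
      have "y = smul (pi ^ i) a + smul (pi ^ n) (smul (pi ^ i) w)"
        unfolding y(2) aw(3) by (simp add: scale_right_distrib mult.commute)
      moreover have "smul (pi ^ i) a \<in> W"
      proof -
        have "smul (pi ^ i) a \<in> span (smul (pi ^ i) ` setpow F (Suc i))" using aw(1) by (rule scale_span)
        moreover have "span (smul (pi ^ i) ` setpow F (Suc i)) \<subseteq> W"
          using P3 subW by (intro span_minimal) auto
        ultimately show ?thesis by blast
      qed
      moreover have "smul (pi ^ n) (smul (pi ^ i) w) \<in> W" using h2[OF aw(2)] PW pmulI by blast
      ultimately show "y \<in> W" using subW subspace_add by metis
    qed
    then have "Y \<subseteq> W" unfolding Y_def using subW span_minimal by blast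
    then show ?thesis using finG GZ unfolding W_def by blast
  qed
  then show ?thesis unfolding cpt_iff Y_def[symmetric] using ZB subZ YZ by blast
qed

end


theorem lemma4p8:
  fixes smul :: "'v::idom \<Rightarrow> 'd::ring \<Rightarrow> 'd" and pi :: 'v and B :: "'d set set"
  assumes "complete_dvr pi"
    and "dagger_algebra smul pi B"
  shows "dagger_algebra smul pi (compactoid_bornology smul pi B)"
proof -
  have dvr0: "pi \<noteq> 0" "\<And>x. x \<noteq> 0 \<Longrightarrow> \<exists>u n. u dvd 1 \<and> x = u * pi ^ n"
    using assms(1) unfolding complete_dvr_def by auto
  have BA: "born_algebra smul B" and BC: "born_complete smul pi B"
    and BT: "born_torsionfree smul pi B" and BS: "semidagger smul pi B"
    using assms(2) unfolding dagger_algebra_def by auto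
  have md: "module smul" and bor0: "bornology B"
    and bsub0: "\<forall>S\<in>B. \<exists>T\<in>B. S \<subseteq> T \<and> module.subspace smul T"
    and bm0: "\<forall>S\<in>B. \<forall>T\<in>B. {s * t | s t. s \<in> S \<and> t \<in> T} \<in> B"
    using BA unfolding born_algebra_def born_module_def by auto
  have mc: "\<forall>a x y. smul a (x * y) = smul a x * y \<and> smul a (x * y) = x * smul a y"
    using BA unfolding born_algebra_def by blast
  have tf0: "\<And>a x. a \<noteq> 0 \<Longrightarrow> smul a x = 0 \<Longrightarrow> x = 0" and btf0: "\<forall>S\<in>B. {x. smul pi x \<in> S} \<in> B"
    using BT unfolding born_torsionfree_def by auto
  interpret D: dagB smul pi B
  proof (unfold_locales)
    show "\<And>a x. a \<noteq> 0 \<Longrightarrow> smul a x = 0 \<Longrightarrow> x = 0" by (rule tf0)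
    show "pi \<noteq> 0" by (rule dvr0(1))
    show "\<And>a x y. smul a (x * y) = smul a x * y" using mc by blast
    show "\<And>a x y. smul a (x * y) = x * smul a y" using mc by blast
    show "\<And>x. x \<noteq> 0 \<Longrightarrow> \<exists>u n. u dvd 1 \<and> x = u * pi ^ n" by (rule dvr0(2))
    show "bornology B" by (rule bor0)
    show "\<And>S. S \<in> B \<Longrightarrow> \<exists>T\<in>B. S \<subseteq> T \<and> module.subspace smul T" using bsub0 by blast
    show "\<And>S T. S \<in> B \<Longrightarrow> T \<in> B \<Longrightarrow> smulset S T \<in> B" using bm0 unfolding smulset_def by blast
    show "\<And>S. S \<in> B \<Longrightarrow> \<exists>T\<in>B. S \<subseteq> T \<and> module.subspace smul T \<and> padic_complete smul pi T"
      using BC unfolding born_complete_def by blast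
    show "\<And>S. S \<in> B \<Longrightarrow> {x. smul pi x \<in> S} \<in> B" using btf0 by blast
    show "\<And>S. S \<in> B \<Longrightarrow> module.span smul (\<Union>i. pmul smul pi i (setpow S (Suc i))) \<in> B"
      using BS unfolding semidagger_def by blast
  qed (use md[unfolded module_def] in blast)+
  have CB: "compactoid_bornology smul pi B = {S. D.cpt S}"
    unfolding compactoid_bornology_def D.cpt_def by simp
  have bor': "bornology {S. D.cpt S}"
    unfolding bornology_def using D.cpt_finite D.cpt_union D.cpt_subset by blast
  have sub': "\<forall>S\<in>{S. D.cpt S}. \<exists>T\<in>{S. D.cpt S}. S \<subseteq> T \<and> module.subspace smul T"
    using D.cpt_complete by blast
  show ?thesis
    unfolding CB dagger_algebra_def born_algebra_def born_module_def born_complete_def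
      born_torsionfree_def semidagger_def
  proof (intro conjI)
    show "module smul" by (rule md)
    show "bornology {S. D.cpt S}" by (rule bor')
    show "\<forall>S\<in>{S. D.cpt S}. \<exists>T\<in>{S. D.cpt S}. S \<subseteq> T \<and> module.subspace smul T" by (rule sub')
    show "\<forall>a x y. smul a (x * y) = smul a x * y \<and> smul a (x * y) = x * smul a y" using mc by blast
    show "\<forall>S\<in>{S. D.cpt S}. \<forall>T\<in>{S. D.cpt S}. {s * t |s t. s \<in> S \<and> t \<in> T} \<in> {S. D.cpt S}"
      using D.cpt_mul unfolding smulset_def by blast
    show "\<forall>S\<in>{S. D.cpt S}. \<exists>T\<in>{S. D.cpt S}. S \<subseteq> T \<and> module.subspace smul T \<and> padic_complete smul pi T"
      using D.cpt_complete by blast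
    show "\<forall>a x. a \<noteq> 0 \<longrightarrow> smul a x = 0 \<longrightarrow> x = 0" using tf0 by blast
    show "\<forall>S\<in>{S. D.cpt S}. {x. smul pi x \<in> S} \<in> {S. D.cpt S}" using D.cpt_tf by blast
    show "\<forall>S\<in>{S. D.cpt S}. module.span smul (\<Union>i. pmul smul pi i (setpow S (Suc i))) \<in> {S. D.cpt S}"
      using D.cpt_sd by blast
  qed
qed

end
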